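(* Let $I$ be a non-degenerate interval and $f:I\to\mathbb{R}$ continuous with a monotone graph $G_f=\{(x,f(x)):x\in I\}\subseteq\mathbb{R}^2$. Then $G_f$ has $\sigma$-finite one-dimensional Hausdorff measure; in particular the Hausdorff dimension of $G_f$ equals $1$.
   Context: A metric space $(X,d)$ is monotone if there are a linear order $<$ on $X$ and a constant $c>0$ such that $d(x,y)\le c\,d(x,z)$ whenever $x<y<z$ in $X$. The graph carries the Euclidean metric. *)

theory Defs
  imports "HOL-Analysis.Analysis"
begin

definition monotone_metric :: "'a::metric_space set \<Rightarrow> bool" where
  "monotone_metric X \<longleftrightarrow>
     (\<exists>r c. linear_order_on X r \<and> c > 0 \<and>
        (\<forall>x\<in>X. \<forall>y\<in>X. \<forall>z\<in>X.
           (x, y) \<in> r \<and> x \<noteq> y \<and> (y, z) \<in> r \<and> y \<noteq> z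
             \<longrightarrow> dist x y \<le> c * dist x z))"

definition hweight :: "real \<Rightarrow> 'a::metric_space set \<Rightarrow> ennreal" where
  "hweight s C = (if C = {} then 0 else if s = 0 then 1 else ennreal (diameter C powr s))"

definition hausdorff_pre :: "real \<Rightarrow> real \<Rightarrow> 'a::metric_space set \<Rightarrow> ennreal" where
  "hausdorff_pre s \<delta> A =
     (INF C \<in> {C :: nat \<Rightarrow> 'a set. A \<subseteq> (\<Union>i. C i) \<and>
                 (\<forall>i. bounded (C i) \<and> diameter (C i) \<le> \<delta>)}.
        (\<Sum>i. hweight s (C i)))"

definition hausdorff_measure :: "real \<Rightarrow> 'a::metric_space set \<Rightarrow> ennreal" where
  "hausdorff_measure s A = (SUP \<delta> \<in> {0<..}. hausdorff_pre s \<delta> A)"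

definition hausdorff_dim :: "'a::metric_space set \<Rightarrow> real" where
  "hausdorff_dim A = Inf {s. s \<ge> 0 \<and> hausdorff_measure s A = 0}"

definition sigma_finite_hausdorff :: "real \<Rightarrow> 'a::metric_space set \<Rightarrow> bool" where
  "sigma_finite_hausdorff s A \<longleftrightarrow>
     (\<exists>B :: nat \<Rightarrow> 'a set. A = (\<Union>n. B n) \<and> (\<forall>n. hausdorff_measure s (B n) < \<infinity>))"

end

theory Submission
  imports Defs
begin


type_synonym pt = "real \<times> real"

lemma hweight1: "bounded C \<Longrightarrow> hweight 1 C = ennreal (diameter C)"
  unfolding hweight_def using diameter_ge_0[of C] by auto

lemma hp_le:
  assumes "A \<subseteq> (\<Union>i. C i)" "\<And>i. bounded (C i) \<and> diameter (C i) \<le> \<delta>"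
  shows "hausdorff_pre s \<delta> A \<le> (\<Sum>i. hweight s (C i))"
  unfolding hausdorff_pre_def by (rule INF_lower) (use assms in auto)

lemma hm_le: "(\<And>\<delta>. \<delta> > 0 \<Longrightarrow> hausdorff_pre s \<delta> A \<le> M) \<Longrightarrow> hausdorff_measure s A \<le> M"
  unfolding hausdorff_measure_def by (rule SUP_least) auto

lemma hm_ge: "\<delta> > 0 \<Longrightarrow> hausdorff_pre s \<delta> A \<le> hausdorff_measure s A"
  unfolding hausdorff_measure_def by (rule SUP_upper) auto

lemma hp_mono_delta: "\<delta> \<le> \<delta>' \<Longrightarrow> hausdorff_pre s \<delta>' A \<le> hausdorff_pre s \<delta> A"
  unfolding hausdorff_pre_def by (rule INF_superset_mono) (auto intro: order.trans)

lemma small_set: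
  fixes S :: "pt set"
  assumes "\<And>x y. x \<in> S \<Longrightarrow> y \<in> S \<Longrightarrow> dist x y \<le> d" "0 \<le> d"
  shows "bounded S \<and> diameter S \<le> d"
proof
  show "bounded S"
  proof (cases "S = {}")
    case False
    then obtain x0 where "x0 \<in> S" by auto
    then show ?thesis unfolding bounded_def using assms(1) by blast
  qed auto
  show "diameter S \<le> d" by (rule diameter_le) (use assms in \<open>auto simp: dist_norm\<close>)
qed

definition sf1 where "sf1 A \<longleftrightarrow> sigma_finite_hausdorff 1 A"

lemma sf_fin: "hausdorff_measure s A < \<infinity> \<Longrightarrow> sigma_finite_hausdorff s A"
  unfolding sigma_finite_hausdorff_def by (rule exI[of _ "\<lambda>_. A"]) auto

lemma sf_UN: fixes A :: "nat \<Rightarrow> 'a::metric_space set"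
  assumes "\<And>n::nat. sigma_finite_hausdorff s (A n)"
  shows "sigma_finite_hausdorff s (\<Union>n. A n)"
proof -
  have "\<forall>n. \<exists>B::nat \<Rightarrow> 'a set. A n = (\<Union>k. B k) \<and> (\<forall>k. hausdorff_measure s (B k) < \<infinity>)"
    using assms unfolding sigma_finite_hausdorff_def by simp
  then have "\<exists>P::nat \<Rightarrow> nat \<Rightarrow> 'a set. \<forall>n. A n = (\<Union>k. P n k) \<and> (\<forall>k. hausdorff_measure s (P n k) < \<infinity>)"
    by (rule choice)
  then obtain P :: "nat \<Rightarrow> nat \<Rightarrow> 'a set" where PP: "\<forall>n. A n = (\<Union>k. P n k) \<and> (\<forall>k. hausdorff_measure s (P n k) < \<infinity>)"
    by (elim exE) 
  have PA: "A n = (\<Union>k. P n k)" for n using PP by simp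
  have PF: "hausdorff_measure s (P n k) < \<infinity>" for n k using PP by simp
  define R where "R m = (case prod_decode m of (n,k) \<Rightarrow> P n k)" for m
  have RP: "R (prod_encode (n,k)) = P n k" for n k unfolding R_def by simp
  have RD: "\<exists>n k. R m = P n k" for m
  proof -
    obtain n k where nk: "prod_decode m = (n,k)" by (cases "prod_decode m") simp
    then have "R m = P n k" unfolding R_def by simp
    then show ?thesis by (intro exI)
  qed
  have "(\<Union>n. A n) = (\<Union>m. R m)"
  proof (rule set_eqI, rule iffI)
    fix x assume "x \<in> (\<Union>n. A n)"
    then obtain n where "x \<in> A n" by (rule UN_E)
    then have "x \<in> (\<Union>k. P n k)" by (simp only: PA)
    then obtain k where "x \<in> P n k" by (rule UN_E)
    then have "x \<in> R (prod_encode (n,k))" by (simp only: RP)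
    then show "x \<in> (\<Union>m. R m)" by (rule UN_I[rotated]) simp
  next
    fix x assume "x \<in> (\<Union>m. R m)"
    then obtain m where m: "x \<in> R m" by (rule UN_E)
    obtain n k where "R m = P n k" using RD[of m] by (elim exE)
    then have "x \<in> P n k" using m by simp
    then have "x \<in> (\<Union>k. P n k)" by (rule UN_I[rotated]) simp
    then have "x \<in> A n" by (simp only: PA)
    then show "x \<in> (\<Union>n. A n)" by (rule UN_I[rotated]) simp
  qed
  moreover have "hausdorff_measure s (R m) < \<infinity>" for m
  proof -
    obtain n k where "R m = P n k" using RD[of m] by (elim exE)
    then show ?thesis using PF by simp
  qed
  ultimately show ?thesis unfolding sigma_finite_hausdorff_def by (intro exI[of _ R] conjI allI)
qed

lemma sf_Un: assumes "sigma_finite_hausdorff s A" "sigma_finite_hausdorff s B"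
  shows "sigma_finite_hausdorff s (A \<union> B)"
proof -
  have "A \<union> B = (\<Union>n::nat. if n = 0 then A else B)"
  proof
    show "(\<Union>n::nat. if n = 0 then A else B) \<subseteq> A \<union> B" by (rule UN_least) simp
    show "A \<union> B \<subseteq> (\<Union>n::nat. if n = 0 then A else B)"
      using UN_upper[of 0 UNIV "\<lambda>n::nat. if n = 0 then A else B"]
        UN_upper[of 1 UNIV "\<lambda>n::nat. if n = 0 then A else B"] by simp
  qed
  moreover have "sigma_finite_hausdorff s (\<Union>n::nat. if n = 0 then A else B)"
    by (rule sf_UN) (simp add: assms)
  ultimately show ?thesis by simp
qed

lemma hweight_lower:
  assumes "bounded C" "diameter C \<le> 1" "0 \<le> s" "s \<le> 1"
  shows "ennreal (diameter C) \<le> hweight s C"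
proof -
  have d0: "0 \<le> diameter C" using assms(1) by (rule diameter_ge_0)
  show ?thesis
  proof (cases "C = {}")
    case True then show ?thesis by (simp add: hweight_def)
  next
    case False
    show ?thesis
    proof (cases "s = 0")
      case True
      then have "hweight s C = 1" using False unfolding hweight_def by simp
      then show ?thesis using assms(2) by (simp add: ennreal_le_1)
    next
      case s0: False
      have "diameter C powr 1 \<le> diameter C powr s"
        by (rule powr_mono') (use assms d0 in auto)
      moreover have "diameter C powr 1 = diameter C" using d0 by (rule powr_one)
      moreover have "hweight s C = ennreal (diameter C powr s)" using False s0 unfolding hweight_def by simp
      ultimately show ?thesis using ennreal_leI[of "diameter C" "diameter C powr s"] by simp
    qed
  qed
qed

lemma hp_lower:
  fixes G :: "pt set"
  assumes "\<And>x. x \<in> {a..b} \<Longrightarrow> \<exists>q\<in>G. fst q = x" "a \<le> b" "0 \<le> s" "s \<le> 1"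
  shows "ennreal ((b-a)/2) \<le> hausdorff_pre s 1 G"
  unfolding hausdorff_pre_def
proof (rule INF_greatest, clarify)
  fix C :: "nat \<Rightarrow> pt set"
  assume cov: "G \<subseteq> (\<Union>i. C i)" and bd: "\<forall>i. bounded (C i) \<and> diameter (C i) \<le> 1"
  define p where "p i = (SOME p. p \<in> C i)" for i
  define K where "K i = (if C i = {} then {} else {fst (p i) - diameter (C i) .. fst (p i) + diameter (C i)})" for i
  have "{a..b} \<subseteq> (\<Union>i. K i)"
  proof
    fix x assume "x \<in> {a..b}"
    then obtain q where q: "q \<in> G" "fst q = x" using assms(1) by blast
    then obtain i where i: "q \<in> C i" using cov by blast
    then have pi: "p i \<in> C i" unfolding p_def by (meson someI)
    have "dist q (p i) \<le> diameter (C i)" using bd i pi diameter_bounded_bound by blast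
    moreover have "\<bar>fst q - fst (p i)\<bar> \<le> dist q (p i)"
      by (metis dist_fst_le dist_real_def)
    ultimately have "x \<in> K i" using i q unfolding K_def by auto
    then show "x \<in> (\<Union>i. K i)" by blast
  qed
  have Km: "K i \<in> sets lborel" for i unfolding K_def by simp
  have "emeasure lborel {a..b} \<le> emeasure lborel (\<Union>i. K i)"
    by (rule emeasure_mono) (fact, use Km in blast)
  also have "\<dots> \<le> (\<Sum>i. emeasure lborel (K i))"
    by (rule emeasure_subadditive_countably) (use Km in blast)
  also have "\<dots> \<le> (\<Sum>i. 2 * hweight s (C i))"
  proof (rule suminf_le)
    fix i
    show "emeasure lborel (K i) \<le> 2 * hweight s (C i)"
    proof (cases "C i = {}")
      case True then show ?thesis by (simp add: K_def)
    next
      case False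
      have d0: "0 \<le> diameter (C i)" using bd diameter_ge_0 by blast
      have "emeasure lborel (K i) = ennreal (2 * diameter (C i))"
        using False d0 by (simp add: K_def)
      also have "\<dots> = 2 * ennreal (diameter (C i))" using d0 by (simp add: ennreal_mult)
      also have "\<dots> \<le> 2 * hweight s (C i)"
        by (intro mult_left_mono hweight_lower) (use bd assms in auto)
      finally show ?thesis .
    qed
  qed (rule summableI)+
  also have "\<dots> = 2 * (\<Sum>i. hweight s (C i))" by (rule ennreal_suminf_cmult)
  finally have le: "ennreal (b - a) \<le> 2 * (\<Sum>i. hweight s (C i))" using assms by simp
  have eq: "ennreal (b - a) = 2 * ennreal ((b-a)/2)"
  proof -
    have e: "2 * ((b-a)/2) = b - a" by simp
    have "ennreal (b - a) = ennreal (2 * ((b-a)/2))" by (simp only: e)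
    also have "\<dots> = ennreal 2 * ennreal ((b-a)/2)" by (rule ennreal_mult) (use assms in auto)
    finally show ?thesis by simp
  qed
  have h: "2 * ennreal ((b-a)/2) \<le> 2 * (\<Sum>i. hweight s (C i))"
    by (rule ord_eq_le_trans[OF sym[OF eq] le])
  have iff: "(2 * ennreal ((b-a)/2) \<le> 2 * (\<Sum>i. hweight s (C i))) = (ennreal ((b-a)/2) \<le> (\<Sum>i. hweight s (C i)))"
    by (rule ennreal_mult_le_mult_iff) simp_all
  show "ennreal ((b-a)/2) \<le> (\<Sum>i. hweight s (C i))" using h by (simp only: iff)
qed

lemma hw_s_le:
  assumes "bounded C" "diameter C \<le> \<eta>" "s > 1"
  shows "hweight s C \<le> ennreal (\<eta> powr (s-1)) * hweight 1 C"
proof (cases "C = {}")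
  case True then show ?thesis by (simp add: hweight_def)
next
  case False
  have d0: "0 \<le> diameter C" using assms(1) by (rule diameter_ge_0)
  have s0: "s \<noteq> 0" using assms by simp
  have "diameter C powr s = diameter C powr ((s-1) + 1)" by simp
  also have "\<dots> = diameter C powr (s-1) * diameter C powr 1" by (rule powr_add)
  also have "\<dots> = diameter C powr (s-1) * diameter C" using d0 by simp
  also have "\<dots> \<le> \<eta> powr (s-1) * diameter C"
    by (rule mult_right_mono[OF powr_mono2]) (use assms d0 in auto)
  finally have le: "diameter C powr s \<le> \<eta> powr (s-1) * diameter C" .
  have "hweight s C = ennreal (diameter C powr s)" using False s0 unfolding hweight_def by simp
  also have "\<dots> \<le> ennreal (\<eta> powr (s-1) * diameter C)" using le by (rule ennreal_leI)
  also have "\<dots> = ennreal (\<eta> powr (s-1)) * ennreal (diameter C)" by (rule ennreal_mult) (use d0 in auto)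
  also have "ennreal (diameter C) = hweight 1 C" using assms(1) by (simp add: hweight1)
  finally show ?thesis .
qed

lemma hm1_cover:
  assumes fin: "hausdorff_measure 1 B < \<infinity>" and s: "s > 1" and d: "\<delta> > 0" and e: "e > 0"
  shows "\<exists>C. B \<subseteq> (\<Union>i. C i) \<and> (\<forall>i. bounded (C i) \<and> diameter (C i) \<le> \<delta>) \<and>
             (\<Sum>i. hweight s (C i)) \<le> ennreal e"
proof -
  obtain m where m: "hausdorff_measure 1 B = ennreal m" "0 \<le> m"
    using fin by (cases "hausdorff_measure 1 B" rule: ennreal_cases) auto
  define \<eta> where "\<eta> = min (min \<delta> 1) ((e/(m+1)) powr (1/(s-1)))"
  have eta0: "\<eta> > 0" unfolding \<eta>_def using d e m s by auto
  have etad: "\<eta> \<le> \<delta>" unfolding \<eta>_def by simp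
  have "\<eta> powr (s-1) \<le> ((e/(m+1)) powr (1/(s-1))) powr (s-1)"
    by (rule powr_mono2) (use s eta0 in \<open>auto simp: \<eta>_def\<close>)
  also have "\<dots> = e/(m+1)" using s e m by (simp add: powr_powr)
  finally have etapow: "\<eta> powr (s-1) * (m+1) \<le> e" using m by (simp add: field_simps)
  have "hausdorff_pre 1 \<eta> B \<le> ennreal m" using hm_ge[OF eta0, of 1 B] m by simp
  also have "\<dots> < ennreal (m+1)" using m by simp
  finally have "hausdorff_pre 1 \<eta> B < ennreal (m+1)" .
  then obtain C where C: "B \<subseteq> (\<Union>i. C i)" "\<forall>i. bounded (C i) \<and> diameter (C i) \<le> \<eta>"
      and sumC: "(\<Sum>i. hweight 1 (C i)) < ennreal (m+1)"
    unfolding hausdorff_pre_def INF_less_iff by blast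
  have "(\<Sum>i. hweight s (C i)) \<le> (\<Sum>i. ennreal (\<eta> powr (s-1)) * hweight 1 (C i))"
  proof (rule suminf_le)
    fix i show "hweight s (C i) \<le> ennreal (\<eta> powr (s-1)) * hweight 1 (C i)"
      using hw_s_le[of "C i" \<eta> s] C s by simp
  qed (rule summableI)+
  also have "\<dots> = ennreal (\<eta> powr (s-1)) * (\<Sum>i. hweight 1 (C i))" by (rule ennreal_suminf_cmult)
  also have "\<dots> \<le> ennreal (\<eta> powr (s-1)) * ennreal (m+1)"
    using sumC by (intro mult_left_mono) auto
  also have "\<dots> = ennreal (\<eta> powr (s-1) * (m+1))" by (rule ennreal_mult[symmetric]) (use m in auto)
  also have "\<dots> \<le> ennreal e" using etapow by (rule ennreal_leI)
  finally show ?thesis using C etad by (intro exI[of _ C]) (auto intro: order.trans)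
qed

lemma sf_zero:
  fixes G :: "'a::metric_space set"
  assumes "sigma_finite_hausdorff 1 G" "s > 1"
  shows "hausdorff_measure s G = 0"
proof -
  obtain B :: "nat \<Rightarrow> 'a set" where B: "G = (\<Union>n. B n)" "\<And>n. hausdorff_measure 1 (B n) < \<infinity>"
    using assms(1) unfolding sigma_finite_hausdorff_def by (elim exE conjE) simp
  have "hausdorff_pre s \<delta> G = 0" if d: "\<delta> > 0" for \<delta>
  proof -
    have eps: "hausdorff_pre s \<delta> G \<le> 0 + ennreal e" if e: "e > 0" for e
    proof -
      have "\<forall>n. \<exists>C. B n \<subseteq> (\<Union>i. C i) \<and> (\<forall>i. bounded (C i) \<and> diameter (C i) \<le> \<delta>) \<and>
             (\<Sum>i. hweight s (C i)) \<le> ennreal (e * (1/2)^Suc n)"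
        using hm1_cover[OF B(2) assms(2) d] e by simp
      then have "\<exists>C::nat \<Rightarrow> nat \<Rightarrow> 'a set. \<forall>n. B n \<subseteq> (\<Union>i. C n i) \<and> (\<forall>i. bounded (C n i) \<and> diameter (C n i) \<le> \<delta>) \<and>
             (\<Sum>i. hweight s (C n i)) \<le> ennreal (e * (1/2)^Suc n)"
        by (rule choice)
      then obtain C :: "nat \<Rightarrow> nat \<Rightarrow> 'a set" where C: "\<forall>n. B n \<subseteq> (\<Union>i. C n i) \<and> (\<forall>i. bounded (C n i) \<and> diameter (C n i) \<le> \<delta>) \<and>
             (\<Sum>i. hweight s (C n i)) \<le> ennreal (e * (1/2)^Suc n)" by (elim exE)
      define D where "D m = (case prod_decode m of (n,k) \<Rightarrow> C n k)" for m
      have DC: "D (prod_encode (n,k)) = C n k" for n k unfolding D_def by simp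
      have DD: "\<exists>n k. D m = C n k" for m
      proof -
        obtain n k where nk: "prod_decode m = (n,k)" by (cases "prod_decode m") simp
        then have "D m = C n k" unfolding D_def by simp
        then show ?thesis by (intro exI)
      qed
      have cov: "G \<subseteq> (\<Union>m. D m)"
      proof
        fix x assume "x \<in> G"
        then obtain n where "x \<in> B n" unfolding B(1) by (rule UN_E)
        moreover have "B n \<subseteq> (\<Union>i. C n i)" using C by simp
        ultimately have "x \<in> (\<Union>i. C n i)" by (rule rev_subsetD)
        then obtain k where "x \<in> C n k" by (rule UN_E)
        then have "x \<in> D (prod_encode (n,k))" by (simp only: DC)
        then show "x \<in> (\<Union>m. D m)" by (rule UN_I[rotated]) simp
      qed
      have bd: "bounded (D m) \<and> diameter (D m) \<le> \<delta>" for m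
      proof -
        obtain n k where "D m = C n k" using DD[of m] by (elim exE)
        then show ?thesis using C by simp
      qed
      have sm: "(\<lambda>n. e * (1/2)^Suc n) sums e"
        using sums_mult[OF power_half_series, of e] by simp
      have "hausdorff_pre s \<delta> G \<le> (\<Sum>m. hweight s (D m))" by (rule hp_le[OF cov bd])
      also have "\<dots> = (\<Sum>n. \<Sum>k. hweight s (C n k))"
      proof -
        have hD: "hweight s (D m) = (\<lambda>p. hweight s (C (fst p) (snd p))) (prod_decode m)" for m
          unfolding D_def by (cases "prod_decode m") simp
        show ?thesis unfolding hD
          by (rule suminf_ennreal_2dimen) simp
      qed
      also have "\<dots> \<le> (\<Sum>n. ennreal (e * (1/2)^Suc n))"
      proof (rule suminf_le)
        fix n show "(\<Sum>k. hweight s (C n k)) \<le> ennreal (e * (1/2)^Suc n)" using C by simp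
      qed (rule summableI)+
      also have "(\<Sum>n. ennreal (e * (1/2)^Suc n)) = ennreal (\<Sum>n. e * (1/2)^Suc n)"
        by (rule suminf_ennreal2) (use e sums_summable[OF sm] in auto)
      also have "(\<Sum>n. e * (1/2)^Suc n) = e" using sm by (rule sums_unique[symmetric])
      finally show ?thesis by simp
    qed
    have "hausdorff_pre s \<delta> G \<le> 0" by (rule ennreal_le_epsilon) (rule eps)
    then show ?thesis by simp
  qed
  then show ?thesis unfolding hausdorff_measure_def by simp
qed

lemma dg1: "\<bar>x - y\<bar> \<le> dist (x, f x) (y, (f::real\<Rightarrow>real) y)"
  by (metis dist_fst_le dist_real_def fst_conv)
lemma dg2: "\<bar>f x - f y\<bar> \<le> dist (x, f x) (y, (f::real\<Rightarrow>real) y)"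
  by (metis dist_snd_le dist_real_def snd_conv)
lemma dg3: "dist (x, f x) (y, (f::real\<Rightarrow>real) y) \<le> \<bar>x - y\<bar> + \<bar>f x - f y\<bar>"
  unfolding dist_Pair_Pair dist_real_def using sqrt_sum_squares_le_sum_abs[of "x-y" "f x - f y"] by simp

lemma inv_lip_fin:
  fixes f :: "real \<Rightarrow> real" and P :: "real set"
  assumes lip: "\<And>x y. x \<in> P \<Longrightarrow> y \<in> P \<Longrightarrow> \<bar>x - y\<bar> \<le> \<bar>f x - f y\<bar>"
    and bd: "\<And>x. x \<in> P \<Longrightarrow> \<bar>f x\<bar> \<le> m" and m0: "0 \<le> m"
  shows "hausdorff_measure 1 ((\<lambda>x. (x, f x)) ` P) < \<infinity>"
proof -
  have "hausdorff_measure 1 ((\<lambda>x. (x, f x)) ` P) \<le> ennreal (4*m+2)"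
  proof (rule hm_le)
    fix \<delta> :: real assume d: "\<delta> > 0"
    define h where "h = min \<delta> 1 / 2"
    have h0: "h > 0" and hd: "2*h \<le> \<delta>" and h1: "h \<le> 1/2" using d by (auto simp: h_def)
    define N where "N = nat \<lceil>2*m/h\<rceil> + 1"
    define Q where "Q j = (if j < N then (\<lambda>x. (x, f x)) ` {x\<in>P. -m + real j*h \<le> f x \<and> f x \<le> -m + (real j+1)*h} else {})" for j
    have Qs: "bounded (Q j) \<and> diameter (Q j) \<le> 2*h" for j
    proof (rule small_set)
      fix p q assume "p \<in> Q j" "q \<in> Q j"
      then obtain x y where xy: "p = (x, f x)" "q = (y, f y)" "x \<in> P" "y \<in> P"
        "-m + real j*h \<le> f x" "f x \<le> -m + (real j+1)*h" "-m + real j*h \<le> f y" "f y \<le> -m + (real j+1)*h"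
        unfolding Q_def by (auto split: if_splits)
      have fy: "\<bar>f x - f y\<bar> \<le> h" using xy by (auto simp: algebra_simps)
      have "dist p q \<le> \<bar>x - y\<bar> + \<bar>f x - f y\<bar>" unfolding xy by (rule dg3)
      also have "\<dots> \<le> 2*h" using lip[OF xy(3,4)] fy by simp
      finally show "dist p q \<le> 2*h" .
    qed (use h0 in simp)
    have cov: "(\<lambda>x. (x, f x)) ` P \<subseteq> (\<Union>j. Q j)"
    proof
      fix p assume "p \<in> (\<lambda>x. (x, f x)) ` P"
      then obtain x where x: "x \<in> P" "p = (x, f x)" by blast
      define j where "j = nat \<lfloor>(f x + m)/h\<rfloor>"
      have nn: "0 \<le> (f x + m)/h" using bd[OF x(1)] h0 by simp
      have j1: "real j \<le> (f x + m)/h" unfolding j_def using nn by linarith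
      have j2: "(f x + m)/h < real j + 1" unfolding j_def using nn by linarith
      have "-m + real j*h \<le> f x" using j1 h0 by (simp add: field_simps)
      moreover have "f x \<le> -m + (real j+1)*h" using j2 h0 by (simp add: field_simps)
      moreover have "j < N"
      proof -
        have "(f x + m)/h \<le> 2*m/h" using bd[OF x(1)] h0 by (simp add: divide_right_mono)
        then have "real j \<le> real (nat \<lceil>2*m/h\<rceil>)" using j1 by linarith
        then show ?thesis unfolding N_def by linarith
      qed
      ultimately have "p \<in> Q j" unfolding Q_def using x by auto
      then show "p \<in> (\<Union>j. Q j)" by blast
    qed
    have "hausdorff_pre 1 \<delta> ((\<lambda>x. (x, f x)) ` P) \<le> (\<Sum>j. hweight 1 (Q j))"
      by (rule hp_le[OF cov]) (use Qs hd in \<open>auto intro: order.trans\<close>)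
    also have "\<dots> = (\<Sum>j<N. hweight 1 (Q j))"
      by (rule suminf_finite) (auto simp: Q_def hweight_def)
    also have "\<dots> \<le> (\<Sum>j<N. ennreal (2*h))"
    proof (rule sum_mono)
      fix j show "hweight 1 (Q j) \<le> ennreal (2*h)"
        using Qs[of j] by (simp add: hweight1 ennreal_leI)
    qed
    also have "\<dots> = ennreal (real N * (2*h))"
      using ennreal_mult[of "real N" "2*h"] h0 by (simp add: ennreal_of_nat_eq_real_of_nat)
    also have "\<dots> \<le> ennreal (4*m+2)"
    proof (rule ennreal_leI)
      have q0: "0 \<le> 2*m/h" using m0 h0 by simp
      have "real N = real_of_int \<lceil>2*m/h\<rceil> + 1" unfolding N_def using q0 by simp
      then have "real N \<le> 2*m/h + 2" by linarith
      then have "real N * (2*h) \<le> (2*m/h + 2) * (2*h)" using h0 by (intro mult_right_mono) auto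
      also have "\<dots> = 4*m + 4*h" using h0 by (simp add: field_simps)
      finally show "real N * (2*h) \<le> 4*m+2" using h1 by simp
    qed
    finally show "hausdorff_pre 1 \<delta> ((\<lambda>x. (x, f x)) ` P) \<le> ennreal (4*m+2)" .
  qed
  also have "\<dots> < \<infinity>" by simp
  finally show ?thesis .
qed

lemma bt_near:
  fixes f :: "real \<Rightarrow> real"
  assumes C1: "1 \<le> C"
    and bt: "\<And>s t u. s\<in>S \<Longrightarrow> t\<in>S \<Longrightarrow> u\<in>S \<Longrightarrow> s<t \<Longrightarrow> t<u \<Longrightarrow>
       dist (s,f s) (t,f t) \<le> C * dist (s,f s) (u,f u) \<and> dist (t,f t) (u,f u) \<le> C * dist (s,f s) (u,f u)"
    and su: "s \<in> S" "u \<in> S" "\<bar>f u - f s\<bar> < u - s" and t: "t \<in> S" "s \<le> t" "t \<le> u"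
  shows "dist (t, f t) (s, f s) \<le> 2*C*(u-s)"
proof -
  have D: "dist (s,f s) (u,f u) \<le> 2*(u-s)"
    using dg3[of s f u] su by (simp add: abs_minus_commute)
  have D0: "0 \<le> dist (s,f s) (u,f u)" by simp
  have "dist (s,f s) (t,f t) \<le> C * dist (s,f s) (u,f u)"
  proof (cases "t = s")
    case True then show ?thesis using C1 by simp
  next
    case ts: False
    show ?thesis
    proof (cases "t = u")
      case True then show ?thesis using C1 D0 by (simp add: mult_le_cancel_right1)
    next
      case False
      then show ?thesis using bt[OF su(1) t(1) su(2)] ts t by simp
    qed
  qed
  also have "\<dots> \<le> C * (2*(u-s))" using D C1 by (intro mult_left_mono) auto
  finally show ?thesis by (simp add: dist_commute algebra_simps)
qed

lemma bt_Z_fin: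
  fixes f :: "real \<Rightarrow> real" and S Z :: "real set"
  assumes S: "S \<subseteq> {a..b}" "a \<le> b" and C1: "1 \<le> C"
    and bt: "\<And>s t u. s\<in>S \<Longrightarrow> t\<in>S \<Longrightarrow> u\<in>S \<Longrightarrow> s<t \<Longrightarrow> t<u \<Longrightarrow>
       dist (s,f s) (t,f t) \<le> C * dist (s,f s) (u,f u) \<and> dist (t,f t) (u,f u) \<le> C * dist (s,f s) (u,f u)"
    and ZS: "Z \<subseteq> S"
    and Z: "\<And>x n. x \<in> Z \<Longrightarrow> \<exists>s\<in>S. \<exists>u\<in>S. s \<le> x \<and> x \<le> u \<and> u - s \<le> 1/(real n+1) \<and> \<bar>f u - f s\<bar> < u - s"
  shows "hausdorff_measure 1 ((\<lambda>x. (x, f x)) ` Z) < \<infinity>"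
proof -
  let ?g = "\<lambda>x. (x, f x)"
  have near: "dist (?g t) (?g s) \<le> 2*C*(u-s)"
    if "s \<in> S" "u \<in> S" "\<bar>f u - f s\<bar> < u - s" "t \<in> S" "s \<le> t" "t \<le> u" for s u t
    using bt_near[OF C1 bt that] by simp
  have "hausdorff_measure 1 (?g ` Z) \<le> ennreal (44*C*(b-a))"
  proof (rule hm_le)
    fix \<delta> :: real assume d: "\<delta> > 0"
    define n where "n = nat \<lceil>44*C/\<delta>\<rceil>"
    have n1: "44*C/(real n+1) \<le> \<delta>"
    proof -
      have "44*C/\<delta> \<le> real n + 1" unfolding n_def by linarith
      then have "44*C \<le> \<delta> * (real n + 1)" using d by (simp add: field_simps)
      then show ?thesis using d by (simp add: field_simps)
    qed
    define K where "K = {(s,u). s \<in> S \<and> u \<in> S \<and> s < u \<and> u - s \<le> 1/(real n+1) \<and> \<bar>f u - f s\<bar> < u - s}"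
    define ctr where "ctr i = (fst i + snd i)/2" for i :: "real \<times> real"
    define rad where "rad i = (snd i - fst i)/2" for i :: "real \<times> real"
    have cb: "cball (ctr i) (rad i) = {fst i..snd i}" for i
      unfolding cball_eq_atLeastAtMost ctr_def rad_def by (simp add: field_simps)
    have Kr: "0 < rad i \<and> rad i \<le> 1" if "i \<in> K" for i
    proof -
      have "1/(real n+1) \<le> 1" by simp
      moreover have "fst i < snd i" "snd i - fst i \<le> 1/(real n+1)" using that unfolding K_def by auto
      ultimately have "snd i - fst i \<le> 1" "0 < snd i - fst i" by linarith+
      then show ?thesis unfolding rad_def by simp
    qed
    obtain Cc where Cc: "countable Cc" "Cc \<subseteq> K"
       "pairwise (\<lambda>i j. disjnt (cball (ctr i) (rad i)) (cball (ctr j) (rad j))) Cc"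
       and Ccov: "\<And>i. i \<in> K \<Longrightarrow> \<exists>j. j \<in> Cc \<and> \<not> disjnt (cball (ctr i) (rad i)) (cball (ctr j) (rad j)) \<and>
                        cball (ctr i) (rad i) \<subseteq> ball (ctr j) (5 * rad j)"
      using Vitali_covering_lemma_cballs_balls[of K rad 1 ctr] Kr by blast
    define W where "W j = ?g ` {t. t \<in> S \<and> (\<exists>i\<in>K. fst i \<le> t \<and> t \<le> snd i \<and>
        \<not> disjnt {fst i..snd i} {fst j..snd j} \<and> snd i - fst i \<le> 5*(snd j - fst j))}" for j
    have Wnear: "dist p (?g (fst j)) \<le> 22*C*(snd j - fst j)" if j: "j \<in> K" and p: "p \<in> W j" for j p
    proof -
      obtain t i where t: "p = ?g t" "t \<in> S" "i \<in> K" "fst i \<le> t" "t \<le> snd i"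
        and dj: "\<not> disjnt {fst i..snd i} {fst j..snd j}" and L: "snd i - fst i \<le> 5*(snd j - fst j)"
        using p unfolding W_def by blast
      have iK: "fst i \<in> S" "snd i \<in> S" "\<bar>f (snd i) - f (fst i)\<bar> < snd i - fst i" "fst i < snd i"
        using t(3) unfolding K_def by auto
      have jK: "fst j \<in> S" "snd j \<in> S" "\<bar>f (snd j) - f (fst j)\<bar> < snd j - fst j" "fst j < snd j"
        using j unfolding K_def by auto
      have z: "fst i \<le> snd j" "fst j \<le> snd i"
        using dj unfolding disjnt_def by auto
      obtain e where e: "e \<in> S" "fst i \<le> e" "e \<le> snd i" "fst j \<le> e" "e \<le> snd j"
      proof (cases "fst j \<le> fst i")
        case True then show ?thesis using that[of "fst i"] iK z by auto
      next
        case False then show ?thesis using that[of "fst j"] jK z by auto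
      qed
      have d1: "dist (?g t) (?g (fst i)) \<le> 2*C*(snd i - fst i)"
        using near[of "fst i" "snd i" t] iK t by simp
      have d2: "dist (?g e) (?g (fst i)) \<le> 2*C*(snd i - fst i)"
        using near[of "fst i" "snd i" e] iK e by simp
      have d3: "dist (?g e) (?g (fst j)) \<le> 2*C*(snd j - fst j)"
        using near[of "fst j" "snd j" e] jK e by simp
      have "dist p (?g (fst j)) \<le> dist (?g t) (?g (fst i)) + dist (?g e) (?g (fst i)) + dist (?g e) (?g (fst j))"
      proof -
        have "dist (?g t) (?g (fst j)) \<le> dist (?g t) (?g (fst i)) + dist (?g (fst i)) (?g (fst j))"
          by (rule dist_triangle)
        moreover have "dist (?g (fst i)) (?g (fst j)) \<le> dist (?g (fst i)) (?g e) + dist (?g e) (?g (fst j))"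
          by (rule dist_triangle)
        moreover have "dist (?g (fst i)) (?g e) = dist (?g e) (?g (fst i))" by (rule dist_commute)
        ultimately show ?thesis unfolding t(1) by linarith
      qed
      also have "\<dots> \<le> 2*C*(snd i - fst i) + 2*C*(snd i - fst i) + 2*C*(snd j - fst j)"
        using d1 d2 d3 by simp
      also have "\<dots> \<le> 2*C*(5*(snd j - fst j)) + 2*C*(5*(snd j - fst j)) + 2*C*(snd j - fst j)"
        using L C1 by (intro add_mono mult_left_mono) auto
      finally show ?thesis by (simp add: algebra_simps)
    qed
    have Ws: "bounded (W j) \<and> diameter (W j) \<le> 44*C*(snd j - fst j)" if j: "j \<in> K" for j
    proof (rule small_set)
      fix p q assume "p \<in> W j" "q \<in> W j"
      then have "dist p (?g (fst j)) \<le> 22*C*(snd j - fst j)" "dist q (?g (fst j)) \<le> 22*C*(snd j - fst j)"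
        using Wnear j by auto
      moreover have "dist p q \<le> dist p (?g (fst j)) + dist q (?g (fst j))" by (rule dist_triangle2)
      ultimately show "dist p q \<le> 44*C*(snd j - fst j)" by linarith
    next
      show "0 \<le> 44*C*(snd j - fst j)" using j C1 unfolding K_def by auto
    qed
    define V where "V = to_nat_on Cc ` Cc"
    define jj where "jj m = from_nat_into Cc m" for m
    have jjC: "jj m \<in> Cc" if "m \<in> V" for m
      using that Cc(1) unfolding V_def jj_def by (auto simp: from_nat_into_to_nat_on)
    define Cov where "Cov m = (if m \<in> V then W (jj m) else {})" for m
    define Iv where "Iv m = (if m \<in> V then {fst (jj m)..snd (jj m)} else {})" for m
    have cov: "?g ` Z \<subseteq> (\<Union>m. Cov m)"
    proof
      fix p assume "p \<in> ?g ` Z"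
      then obtain x where x: "x \<in> Z" "p = ?g x" by blast
      obtain s u where su: "s\<in>S" "u\<in>S" "s \<le> x" "x \<le> u" "u - s \<le> 1/(real n+1)" "\<bar>f u - f s\<bar> < u - s"
        using Z[OF x(1), of n] by blast
      have iK: "(s,u) \<in> K" unfolding K_def using su by auto
      obtain j where j: "j \<in> Cc" "\<not> disjnt (cball (ctr (s,u)) (rad (s,u))) (cball (ctr j) (rad j))"
          "cball (ctr (s,u)) (rad (s,u)) \<subseteq> ball (ctr j) (5 * rad j)"
        using Ccov[OF iK] by blast
      have "s \<in> {s..u}" "u \<in> {s..u}" using su by auto
      then have "s \<in> ball (ctr j) (5 * rad j)" "u \<in> ball (ctr j) (5 * rad j)"
        using j(3) unfolding cb by (auto simp del: atLeastAtMost_iff)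
      then have L: "u - s \<le> 5*(snd j - fst j)"
        unfolding ctr_def rad_def ball_def dist_real_def mem_Collect_eq abs_less_iff by linarith
      have "p \<in> W j" unfolding W_def x(2)
        using iK su ZS x(1) j(2) L unfolding cb by (intro imageI CollectI conjI bexI[of _ "(s,u)"]) auto
      moreover have m: "to_nat_on Cc j \<in> V" unfolding V_def using j by simp
      moreover have "jj (to_nat_on Cc j) = j" unfolding jj_def using Cc(1) j(1) by (simp add: from_nat_into_to_nat_on)
      ultimately have "p \<in> Cov (to_nat_on Cc j)" unfolding Cov_def by simp
      then show "p \<in> (\<Union>m. Cov m)" by blast
    qed
    have Covs: "bounded (Cov m) \<and> diameter (Cov m) \<le> \<delta>" for m
    proof (cases "m \<in> V")
      case True
      then have jK: "jj m \<in> K" using jjC Cc(2) by auto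
      then have "snd (jj m) - fst (jj m) \<le> 1/(real n+1)" unfolding K_def by auto
      then have "44*C*(snd (jj m) - fst (jj m)) \<le> 44*C*(1/(real n+1))" using C1 by (intro mult_left_mono) auto
      also have "\<dots> \<le> \<delta>" using n1 by simp
      finally show ?thesis using Ws[OF jK] True unfolding Cov_def by auto
    next
      case False then show ?thesis unfolding Cov_def using d by simp
    qed
    have Ivm: "Iv m \<in> sets lborel" for m unfolding Iv_def by simp
    have disj: "disjoint_family Iv"
    proof (unfold disjoint_family_on_def, intro ballI impI)
      fix m m' :: nat assume mm: "m \<noteq> m'"
      show "Iv m \<inter> Iv m' = {}"
      proof (cases "m \<in> V \<and> m' \<in> V")
        case True
        then obtain j j' where jj': "j \<in> Cc" "j' \<in> Cc" "m = to_nat_on Cc j" "m' = to_nat_on Cc j'"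
          unfolding V_def by blast
        have "jj m = j" "jj m' = j'" unfolding jj_def jj' using Cc(1) jj' by (auto simp: from_nat_into_to_nat_on)
        moreover have "j \<noteq> j'" using mm jj' by auto
        ultimately have "disjnt {fst (jj m)..snd (jj m)} {fst (jj m')..snd (jj m')}"
          using Cc(3) jj' unfolding pairwise_def cb by auto
        then show ?thesis using True unfolding Iv_def disjnt_def by simp
      next
        case False then show ?thesis unfolding Iv_def by auto
      qed
    qed
    have "hausdorff_pre 1 \<delta> (?g ` Z) \<le> (\<Sum>m. hweight 1 (Cov m))" by (rule hp_le[OF cov Covs])
    also have "\<dots> \<le> (\<Sum>m. ennreal (44*C) * emeasure lborel (Iv m))"
    proof (rule suminf_le)
      fix m show "hweight 1 (Cov m) \<le> ennreal (44*C) * emeasure lborel (Iv m)"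
      proof (cases "m \<in> V")
        case True
        then have jK: "jj m \<in> K" using jjC Cc(2) by auto
        then have lt: "fst (jj m) < snd (jj m)" unfolding K_def by auto
        have "hweight 1 (Cov m) = ennreal (diameter (W (jj m)))"
          using True Ws[OF jK] unfolding Cov_def by (simp add: hweight1)
        also have "\<dots> \<le> ennreal (44*C*(snd (jj m) - fst (jj m)))" using Ws[OF jK] by (simp add: ennreal_leI)
        also have "\<dots> = ennreal (44*C) * ennreal (snd (jj m) - fst (jj m))"
          by (rule ennreal_mult) (use C1 lt in auto)
        also have "ennreal (snd (jj m) - fst (jj m)) = emeasure lborel (Iv m)"
          unfolding Iv_def using True lt by simp
        finally show ?thesis .
      next
        case False then show ?thesis unfolding Cov_def Iv_def by (simp add: hweight_def)
      qed
    qed (rule summableI)+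
    also have "\<dots> = ennreal (44*C) * (\<Sum>m. emeasure lborel (Iv m))" by (rule ennreal_suminf_cmult)
    also have "(\<Sum>m. emeasure lborel (Iv m)) = emeasure lborel (\<Union>m. Iv m)"
      by (rule suminf_emeasure) (use Ivm disj in auto)
    also have "\<dots> \<le> emeasure lborel {a..b}"
    proof (rule emeasure_mono)
      show "(\<Union>m. Iv m) \<subseteq> {a..b}"
      proof
        fix x assume "x \<in> (\<Union>m. Iv m)"
        then obtain m where m: "x \<in> Iv m" by blast
        then have mV: "m \<in> V" unfolding Iv_def by (auto split: if_splits)
        then have "jj m \<in> K" using jjC Cc(2) by auto
        then have "fst (jj m) \<in> S" "snd (jj m) \<in> S" unfolding K_def by auto
        then show "x \<in> {a..b}" using m mV S(1) unfolding Iv_def by force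
      qed
    qed simp
    also have "emeasure lborel {a..b} = ennreal (b - a)" using S(2) by simp
    also have "ennreal (44*C) * ennreal (b - a) = ennreal (44*C*(b-a))"
      by (rule ennreal_mult[symmetric]) (use C1 S(2) in auto)
    finally show "hausdorff_pre 1 \<delta> (?g ` Z) \<le> ennreal (44*C*(b-a))"
      by (simp add: mult_left_mono)
  qed
  also have "\<dots> < \<infinity>" by simp
  finally show ?thesis .
qed

lemma bt_sf:
  fixes f :: "real \<Rightarrow> real" and S :: "real set"
  assumes S: "S \<subseteq> {a..b}" "a \<le> b" and C1: "1 \<le> C"
    and bt: "\<And>s t u. s\<in>S \<Longrightarrow> t\<in>S \<Longrightarrow> u\<in>S \<Longrightarrow> s<t \<Longrightarrow> t<u \<Longrightarrow>
       dist (s,f s) (t,f t) \<le> C * dist (s,f s) (u,f u) \<and> dist (t,f t) (u,f u) \<le> C * dist (s,f s) (u,f u)"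
  shows "sigma_finite_hausdorff 1 ((\<lambda>x. (x, f x)) ` S)"
proof -
  let ?g = "\<lambda>x. (x, f x)"
  define Z where "Z = {x\<in>S. \<forall>n. \<exists>s\<in>S. \<exists>u\<in>S. s \<le> x \<and> x \<le> u \<and> u - s \<le> 1/(real n+1) \<and> \<bar>f u - f s\<bar> < u - s}"
  define E where "E n = {x\<in>S. \<forall>s\<in>S. \<forall>u\<in>S. s \<le> x \<and> x \<le> u \<and> u - s \<le> 1/(real n+1) \<longrightarrow> u - s \<le> \<bar>f u - f s\<bar>}" for n :: nat
  define P where "P n k m = E n \<inter> {a + real k/(real n+1) .. a + (real k+1)/(real n+1)} \<inter> {x. \<bar>f x\<bar> \<le> real m}"
    for n k m :: nat
  have Sdec: "S = Z \<union> (\<Union>n. \<Union>k. \<Union>m. P n k m)"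
  proof
    show "Z \<union> (\<Union>n. \<Union>k. \<Union>m. P n k m) \<subseteq> S" unfolding Z_def P_def E_def by auto
    show "S \<subseteq> Z \<union> (\<Union>n. \<Union>k. \<Union>m. P n k m)"
    proof
      fix x assume xS: "x \<in> S"
      show "x \<in> Z \<union> (\<Union>n. \<Union>k. \<Union>m. P n k m)"
      proof (cases "x \<in> Z")
        case True then show ?thesis by simp
      next
        case False
        then obtain n where "\<not> (\<exists>s\<in>S. \<exists>u\<in>S. s \<le> x \<and> x \<le> u \<and> u - s \<le> 1/(real n+1) \<and> \<bar>f u - f s\<bar> < u - s)"
          using xS unfolding Z_def by blast
        then have xE: "x \<in> E n" using xS unfolding E_def by (auto simp: not_less)
        define k where "k = nat \<lfloor>(x - a)*(real n+1)\<rfloor>"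
        have nn: "0 \<le> (x - a)*(real n+1)" using xS S by auto
        have k1: "real k \<le> (x - a)*(real n+1)" unfolding k_def using nn by linarith
        have k2: "(x - a)*(real n+1) < real k + 1" unfolding k_def using nn by linarith
        have "a + real k/(real n+1) \<le> x" using k1 by (simp add: field_simps)
        moreover have "x \<le> a + (real k+1)/(real n+1)" using k2 by (simp add: field_simps)
        moreover have "\<bar>f x\<bar> \<le> real (nat \<lceil>\<bar>f x\<bar>\<rceil>)" by linarith
        ultimately have "x \<in> P n k (nat \<lceil>\<bar>f x\<bar>\<rceil>)" unfolding P_def using xE by auto
        then show ?thesis by blast
      qed
    qed
  qed
  have imdec: "?g ` S = ?g ` Z \<union> (\<Union>n. \<Union>k. \<Union>m. ?g ` P n k m)"
    by (subst Sdec) (simp only: image_Un image_UN)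
  have sfZ: "sigma_finite_hausdorff 1 (?g ` Z)"
  proof (rule sf_fin, rule bt_Z_fin[OF S C1 bt])
    show "Z \<subseteq> S" unfolding Z_def by auto
  next
    fix x n assume "x \<in> Z"
    then show "\<exists>s\<in>S. \<exists>u\<in>S. s \<le> x \<and> x \<le> u \<and> u - s \<le> 1/(real n+1) \<and> \<bar>f u - f s\<bar> < u - s"
      unfolding Z_def by blast
  qed
  have sfP: "sigma_finite_hausdorff 1 (?g ` P n k m)" for n k m
  proof (rule sf_fin, rule inv_lip_fin)
    have key: "y - x \<le> \<bar>f y - f x\<bar>" if "x \<in> P n k m" "y \<in> P n k m" "x \<le> y" for x y
    proof -
      have "y - x \<le> 1/(real n+1)" using that unfolding P_def by (auto simp: field_simps)
      moreover have "x \<in> E n" "x \<in> S" "y \<in> S" using that unfolding P_def E_def by auto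
      ultimately show ?thesis using that(3) unfolding E_def by auto
    qed
    fix x y assume "x \<in> P n k m" "y \<in> P n k m"
    then show "\<bar>x - y\<bar> \<le> \<bar>f x - f y\<bar>"
      using key[of x y] key[of y x] by (cases "x \<le> y") (auto simp: abs_minus_commute)
  next
    fix x assume "x \<in> P n k m" then show "\<bar>f x\<bar> \<le> real m" unfolding P_def by auto
  qed simp
  show ?thesis unfolding imdec
    by (intro sf_Un sfZ sf_UN sfP)
qed

lemma side_lemma:
  fixes f :: "real \<Rightarrow> real" and R :: "real \<Rightarrow> real \<Rightarrow> bool"
  assumes cont: "continuous_on I f" and c: "c > 0"
    and tot: "\<And>x y. x \<in> I \<Longrightarrow> y \<in> I \<Longrightarrow> x \<noteq> y \<Longrightarrow> R x y \<or> R y x"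
    and mono: "\<And>x y z. x \<in> I \<Longrightarrow> y \<in> I \<Longrightarrow> z \<in> I \<Longrightarrow> R x y \<Longrightarrow> R y z \<Longrightarrow>
        dist (x, f x) (y, f y) \<le> c * dist (x, f x) (z, f z)"
    and L: "L \<subseteq> I" "is_interval L" and x: "x \<in> I" "x \<notin> L"
  shows "(\<forall>y\<in>L. R x y) \<or> (\<forall>y\<in>L. R y x)"
proof (rule ccontr)
  let ?g = "\<lambda>x. (x, f x)"
  have gc: "continuous_on I ?g" by (intro continuous_on_Pair continuous_on_id cont)
  assume "\<not> ((\<forall>y\<in>L. R x y) \<or> (\<forall>y\<in>L. R y x))"
  then obtain y1 y2 where y1: "y1 \<in> L" "\<not> R x y1" and y2: "y2 \<in> L" "\<not> R y2 x" by blast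
  have y1x: "R y1 x" using tot[of y1 x] y1 L x by auto
  have y2x: "R x y2" using tot[of y2 x] y2 L x by auto
  have openA: "\<exists>e>0. \<forall>z\<in>I. dist z y < e \<longrightarrow> \<not> R z x" if y: "y \<in> I" "y \<noteq> x" "R x y" for y
  proof -
    define D where "D = dist (?g y) (?g x)"
    have D0: "D > 0" unfolding D_def using y by simp
    have ce: "\<forall>\<epsilon>>0. \<exists>\<delta>>0. \<forall>x'\<in>I. dist x' y < \<delta> \<longrightarrow> dist (?g x') (?g y) < \<epsilon>"
      using gc y(1) unfolding continuous_on_iff by (rule bspec)
    have Dc: "D/(c+1) > 0" using D0 c by simp
    from ce[rule_format, OF Dc] obtain e where e: "e > 0" "\<forall>z\<in>I. dist z y < e \<longrightarrow> dist (?g z) (?g y) < D/(c+1)"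
      by blast
    have "\<not> R z x" if z: "z \<in> I" "dist z y < e" for z
    proof
      assume Rz: "R z x"
      have m: "dist (?g z) (?g x) \<le> c * dist (?g z) (?g y)" using mono[OF z(1) x(1) y(1) Rz y(3)] .
      have dz: "dist (?g z) (?g y) < D/(c+1)" using e z by blast
      have "D \<le> dist (?g y) (?g z) + dist (?g z) (?g x)" unfolding D_def by (rule dist_triangle)
      also have "\<dots> \<le> (c+1) * dist (?g z) (?g y)" using m by (simp add: dist_commute algebra_simps)
      also have "\<dots> < (c+1) * (D/(c+1))" using dz c by (intro mult_strict_left_mono) auto
      also have "\<dots> = D" using c by simp
      finally show False by simp
    qed
    then show ?thesis using e(1) by blast
  qed
  have openB: "\<exists>e>0. \<forall>z\<in>I. dist z y < e \<longrightarrow> \<not> R x z" if y: "y \<in> I" "y \<noteq> x" "R y x" for y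
  proof -
    define D where "D = dist (?g y) (?g x)"
    have D0: "D > 0" unfolding D_def using y by simp
    have ce: "\<forall>\<epsilon>>0. \<exists>\<delta>>0. \<forall>x'\<in>I. dist x' y < \<delta> \<longrightarrow> dist (?g x') (?g y) < \<epsilon>"
      using gc y(1) unfolding continuous_on_iff by (rule bspec)
    have Dc: "D/(c+1) > 0" using D0 c by simp
    from ce[rule_format, OF Dc] obtain e where e: "e > 0" "\<forall>z\<in>I. dist z y < e \<longrightarrow> dist (?g z) (?g y) < D/(c+1)"
      by blast
    have "\<not> R x z" if z: "z \<in> I" "dist z y < e" for z
    proof
      assume Rz: "R x z"
      have m: "D \<le> c * dist (?g y) (?g z)" unfolding D_def using mono[OF y(1) x(1) z(1) y(3) Rz] .
      have "dist (?g z) (?g y) < D/(c+1)" using e z by blast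
      then have dz: "dist (?g y) (?g z) < D/(c+1)" by (simp add: dist_commute)
      have "D \<le> c * dist (?g y) (?g z)" by (rule m)
      also have "\<dots> \<le> c * (D/(c+1))" using dz c by (intro mult_left_mono) auto
      also have "\<dots> < D" using c D0 by (simp add: field_simps)
      finally show False by simp
    qed
    then show ?thesis using e(1) by blast
  qed
  define A where "A = \<Union>{ball y e | y e. y \<in> I \<and> y \<noteq> x \<and> R x y \<and> e > 0 \<and> (\<forall>z\<in>I. dist z y < e \<longrightarrow> \<not> R z x)}"
  define B where "B = \<Union>{ball y e | y e. y \<in> I \<and> y \<noteq> x \<and> R y x \<and> e > 0 \<and> (\<forall>z\<in>I. dist z y < e \<longrightarrow> \<not> R x z)}"
  have oA: "open A" unfolding A_def by (rule open_Union) auto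
  have oB: "open B" unfolding B_def by (rule open_Union) auto
  have inA: "y \<in> A" if yy: "y \<in> I" "y \<noteq> x" "R x y" for y
  proof -
    obtain e where "e > 0" "\<forall>z\<in>I. dist z y < e \<longrightarrow> \<not> R z x" using openA[OF yy] by blast
    then have "ball y e \<subseteq> A" unfolding A_def using yy by blast
    then show ?thesis using \<open>e > 0\<close> by auto
  qed
  have inB: "y \<in> B" if yy: "y \<in> I" "y \<noteq> x" "R y x" for y
  proof -
    obtain e where "e > 0" "\<forall>z\<in>I. dist z y < e \<longrightarrow> \<not> R x z" using openB[OF yy] by blast
    then have "ball y e \<subseteq> B" unfolding B_def using yy by blast
    then show ?thesis using \<open>e > 0\<close> by auto
  qed
  have cov: "L \<subseteq> A \<union> B"
  proof
    fix y assume y: "y \<in> L"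
    then have "y \<in> I" "y \<noteq> x" using L x by auto
    then show "y \<in> A \<union> B" using tot[of x y] inA inB x by auto
  qed
  have dis: "A \<inter> B \<inter> L = {}"
  proof (rule ccontr)
    assume "A \<inter> B \<inter> L \<noteq> {}"
    then obtain z where z: "z \<in> A" "z \<in> B" "z \<in> L" by blast
    obtain y e where ye: "z \<in> ball y e" "\<forall>w\<in>I. dist w y < e \<longrightarrow> \<not> R w x"
      using z(1) unfolding A_def by blast
    obtain y' e' where ye': "z \<in> ball y' e'" "\<forall>w\<in>I. dist w y' < e' \<longrightarrow> \<not> R x w"
      using z(2) unfolding B_def by blast
    have zI: "z \<in> I" "z \<noteq> x" using z(3) L x by auto
    have "\<not> R z x" using ye zI by (simp add: dist_commute)
    moreover have "\<not> R x z" using ye' zI by (simp add: dist_commute)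
    ultimately show False using tot[OF zI(1) x(1) zI(2)] by blast
  qed
  have "A \<inter> L = {} \<or> B \<inter> L = {}"
    by (rule connectedD[OF is_interval_connected[OF L(2)] oA oB dis cov])
  moreover have "y2 \<in> A" using inA[of y2] y2 y2x L x by auto
  moreover have "y1 \<in> B" using inB[of y1] y1 y1x L x by auto
  ultimately show False using y1 y2 by blast
qed



lemma bt_sf_all:
  fixes f :: "real \<Rightarrow> real" and S :: "real set"
  assumes C1: "1 \<le> C"
    and bt: "\<And>s t u. s\<in>S \<Longrightarrow> t\<in>S \<Longrightarrow> u\<in>S \<Longrightarrow> s<t \<Longrightarrow> t<u \<Longrightarrow>
       dist (s,f s) (t,f t) \<le> C * dist (s,f s) (u,f u) \<and> dist (t,f t) (u,f u) \<le> C * dist (s,f s) (u,f u)"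
  shows "sigma_finite_hausdorff 1 ((\<lambda>x. (x, f x)) ` S)"
proof -
  have e: "(\<lambda>x. (x, f x)) ` S = (\<Union>n. (\<lambda>x. (x, f x)) ` (S \<inter> {-real n..real n}))"
  proof
    show "(\<lambda>x. (x, f x)) ` S \<subseteq> (\<Union>n. (\<lambda>x. (x, f x)) ` (S \<inter> {-real n..real n}))"
    proof
      fix p assume "p \<in> (\<lambda>x. (x, f x)) ` S"
      then obtain x where x: "x \<in> S" "p = (x, f x)" by blast
      have "\<bar>x\<bar> \<le> real (nat \<lceil>\<bar>x\<bar>\<rceil>)" by linarith
      then have h: "-real (nat \<lceil>\<bar>x\<bar>\<rceil>) \<le> x" "x \<le> real (nat \<lceil>\<bar>x\<bar>\<rceil>)" by linarith+
      have "x \<in> S \<inter> {-real (nat \<lceil>\<bar>x\<bar>\<rceil>)..real (nat \<lceil>\<bar>x\<bar>\<rceil>)}"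
        using x(1) h by (intro IntI atLeastAtMost_iff[THEN iffD2] conjI)
      then show "p \<in> (\<Union>n. (\<lambda>x. (x, f x)) ` (S \<inter> {-real n..real n}))" using x by blast
    qed
  qed auto
  show ?thesis unfolding e
  proof (rule sf_UN)
    fix n :: nat
    show "sigma_finite_hausdorff 1 ((\<lambda>x. (x, f x)) ` (S \<inter> {-real n..real n}))"
      by (rule bt_sf[OF _ _ C1]) (use bt in auto)
  qed
qed

theorem corollary3p6:
  fixes I :: "real set" and f :: "real \<Rightarrow> real"
  assumes "is_interval I" and "\<exists>a\<in>I. \<exists>b\<in>I. a < b"
    and "continuous_on I f"
    and "monotone_metric ((\<lambda>x. (x, f x)) ` I)"
  shows "sigma_finite_hausdorff 1 ((\<lambda>x. (x, f x)) ` I)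
         \<and> hausdorff_dim ((\<lambda>x. (x, f x)) ` I) = 1"
proof -
  let ?g = "\<lambda>x. (x, f x)"
  obtain r c where r: "linear_order_on (?g ` I) r" and c: "c > 0"
    and mon: "\<forall>x\<in>?g ` I. \<forall>y\<in>?g ` I. \<forall>z\<in>?g ` I.
           (x, y) \<in> r \<and> x \<noteq> y \<and> (y, z) \<in> r \<and> y \<noteq> z \<longrightarrow> dist x y \<le> c * dist x z"
    using assms(4) unfolding monotone_metric_def by blast
  define R where "R x y \<longleftrightarrow> (?g x, ?g y) \<in> r \<and> x \<noteq> y" for x y
  have tot: "R x y \<or> R y x" if "x \<in> I" "y \<in> I" "x \<noteq> y" for x y
  proof -
    have "total_on (?g ` I) r" using r unfolding linear_order_on_def by blast
    then have "(?g x, ?g y) \<in> r \<or> (?g y, ?g x) \<in> r" using that unfolding total_on_def by auto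
    then show ?thesis unfolding R_def using that by auto
  qed
  have asym: "\<not> (R x y \<and> R y x)" for x y
  proof
    assume "R x y \<and> R y x"
    moreover have "antisym r" using r unfolding linear_order_on_def partial_order_on_def by blast
    ultimately have "?g x = ?g y" unfolding R_def antisym_def by blast
    then show False using \<open>R x y \<and> R y x\<close> unfolding R_def by simp
  qed
  have mono: "dist (?g x) (?g y) \<le> c * dist (?g x) (?g z)"
    if "x \<in> I" "y \<in> I" "z \<in> I" "R x y" "R y z" for x y z
    using mon that unfolding R_def by auto
  have side: "(\<forall>y\<in>L. R x y) \<or> (\<forall>y\<in>L. R y x)" if "L \<subseteq> I" "is_interval L" "x \<in> I" "x \<notin> L" for L x
    by (rule side_lemma[OF assms(3) c tot mono that]) auto
  define SA where "SA = {x\<in>I. (\<forall>y\<in>I. y < x \<longrightarrow> R y x) \<and> (\<forall>y\<in>I. x < y \<longrightarrow> R x y)}"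
  define SR where "SR = {x\<in>I. (\<forall>y\<in>I. y < x \<longrightarrow> R x y) \<and> (\<forall>y\<in>I. x < y \<longrightarrow> R y x)}"
  define SP where "SP = I - SA - SR"
  have SPext: "(\<forall>y\<in>I. y \<noteq> x \<longrightarrow> R x y) \<or> (\<forall>y\<in>I. y \<noteq> x \<longrightarrow> R y x)" if x: "x \<in> SP" for x
  proof -
    have xI: "x \<in> I" using x unfolding SP_def by auto
    have l: "(\<forall>y\<in>I \<inter> {..<x}. R x y) \<or> (\<forall>y\<in>I \<inter> {..<x}. R y x)"
      by (rule side) (use xI assms(1) is_interval_io in \<open>auto intro: is_interval_Int\<close>)
    have rr: "(\<forall>y\<in>I \<inter> {x<..}. R x y) \<or> (\<forall>y\<in>I \<inter> {x<..}. R y x)"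
      by (rule side) (use xI assms(1) is_interval_oi in \<open>auto intro: is_interval_Int\<close>)
    have nA: "x \<notin> SA" and nR: "x \<notin> SR" using x unfolding SP_def by auto
    show ?thesis
    proof (cases "\<forall>y\<in>I \<inter> {..<x}. R x y")
      case True
      then have "\<not> (\<forall>y\<in>I \<inter> {x<..}. R y x)" using nR xI unfolding SR_def by auto
      then have "\<forall>y\<in>I \<inter> {x<..}. R x y" using rr by blast
      then have "\<forall>y\<in>I. y \<noteq> x \<longrightarrow> R x y" using True by (auto simp: neq_iff)
      then show ?thesis by blast
    next
      case False
      then have L: "\<forall>y\<in>I \<inter> {..<x}. R y x" using l by blast
      then have "\<not> (\<forall>y\<in>I \<inter> {x<..}. R x y)" using nA xI unfolding SA_def by auto
      then have "\<forall>y\<in>I \<inter> {x<..}. R y x" using rr by blast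
      then have "\<forall>y\<in>I. y \<noteq> x \<longrightarrow> R y x" using L by (auto simp: neq_iff)
      then show ?thesis by blast
    qed
  qed
  have C1: "1 \<le> c + 1" using c by simp
  have trng: "dist (?g t) (?g u) \<le> dist (?g s) (?g t) + dist (?g s) (?g u)" for s t u
    by (rule dist_triangle3)
  have btA: "dist (s,f s) (t,f t) \<le> (c+1) * dist (s,f s) (u,f u) \<and> dist (t,f t) (u,f u) \<le> (c+1) * dist (s,f s) (u,f u)"
    if "s\<in>SA" "t\<in>SA" "u\<in>SA" "s<t" "t<u" for s t u
  proof -
    have I: "s \<in> I" "t \<in> I" "u \<in> I" using that unfolding SA_def by auto
    have "R s t" "R t u" using that unfolding SA_def by auto
    then have m: "dist (?g s) (?g t) \<le> c * dist (?g s) (?g u)" using mono I by blast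
    have D0: "0 \<le> dist (?g s) (?g u)" by simp
    have e: "(c+1) * dist (?g s) (?g u) = c * dist (?g s) (?g u) + dist (?g s) (?g u)" by (simp add: distrib_right)
    show ?thesis using trng[of t u s] m D0 unfolding e by linarith
  qed
  have btR: "dist (s,f s) (t,f t) \<le> (c+1) * dist (s,f s) (u,f u) \<and> dist (t,f t) (u,f u) \<le> (c+1) * dist (s,f s) (u,f u)"
    if "s\<in>SR" "t\<in>SR" "u\<in>SR" "s<t" "t<u" for s t u
  proof -
    have I: "s \<in> I" "t \<in> I" "u \<in> I" using that unfolding SR_def by auto
    have "R u t" "R t s" using that unfolding SR_def by auto
    then have m: "dist (?g u) (?g t) \<le> c * dist (?g u) (?g s)" using mono I by blast
    have tr: "dist (?g s) (?g t) \<le> dist (?g u) (?g s) + dist (?g u) (?g t)" by (rule dist_triangle3)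
    have D0: "0 \<le> dist (?g s) (?g u)" by simp
    have e: "(c+1) * dist (?g s) (?g u) = c * dist (?g s) (?g u) + dist (?g s) (?g u)" by (simp add: distrib_right)
    have cm: "dist (?g u) (?g s) = dist (?g s) (?g u)" "dist (?g u) (?g t) = dist (?g t) (?g u)" by (simp_all add: dist_commute)
    show ?thesis using tr m D0 unfolding e cm by linarith
  qed
  have btP: "dist (s,f s) (t,f t) \<le> (c+1) * dist (s,f s) (u,f u) \<and> dist (t,f t) (u,f u) \<le> (c+1) * dist (s,f s) (u,f u)"
    if "s\<in>SP" "t\<in>SP" "u\<in>SP" "s<t" "t<u" for s t u
  proof -
    have I: "s \<in> I" "t \<in> I" "u \<in> I" using that unfolding SP_def by auto
    have ne: "s \<noteq> t" "t \<noteq> u" "s \<noteq> u" using that by auto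
    have mnmn: False if h: "\<forall>y\<in>I. y \<noteq> x \<longrightarrow> R x y" "\<forall>y\<in>I. y \<noteq> x' \<longrightarrow> R x' y" "x \<in> I" "x' \<in> I" "x \<noteq> x'" for x x'
    proof -
      have "R x x'" using h(1)[rule_format, OF h(4)] h(5) by simp
      moreover have "R x' x" using h(2)[rule_format, OF h(3)] h(5) by simp
      ultimately show False using asym[of x x'] by simp
    qed
    have mxmx: False if h: "\<forall>y\<in>I. y \<noteq> x \<longrightarrow> R y x" "\<forall>y\<in>I. y \<noteq> x' \<longrightarrow> R y x'" "x \<in> I" "x' \<in> I" "x \<noteq> x'" for x x'
    proof -
      have "R x' x" using h(1)[rule_format, OF h(4)] h(5) by simp
      moreover have "R x x'" using h(2)[rule_format, OF h(3)] h(5) by simp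
      ultimately show False using asym[of x x'] by simp
    qed
    have False
      using SPext[OF that(1)] SPext[OF that(2)] SPext[OF that(3)]
    proof (elim disjE)
    qed (use mnmn[of s t] mnmn[of s u] mnmn[of t u] mxmx[of s t] mxmx[of s u] mxmx[of t u] I ne in \<open>simp only:\<close>; blast)+
    then show ?thesis ..
  qed
  have sfA: "sigma_finite_hausdorff 1 (?g ` SA)" by (rule bt_sf_all[OF C1 btA])
  have sfR: "sigma_finite_hausdorff 1 (?g ` SR)" by (rule bt_sf_all[OF C1 btR])
  have sfP: "sigma_finite_hausdorff 1 (?g ` SP)" by (rule bt_sf_all[OF C1 btP])
  have "SA \<subseteq> I" "SR \<subseteq> I" unfolding SA_def SR_def by auto
  then have Idec: "I = SA \<union> SR \<union> SP" unfolding SP_def by blast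
  have sf: "sigma_finite_hausdorff 1 (?g ` I)"
    unfolding Idec image_Un by (intro sf_Un sfA sfR sfP)
  obtain a b where ab: "a \<in> I" "b \<in> I" "a < b" using assms(2) by blast
  have abI: "{a..b} \<subseteq> I"
  proof
    fix x assume "x \<in> {a..b}"
    then show "x \<in> I" using assms(1)[unfolded is_interval_1, rule_format, OF ab(1) ab(2)] by simp
  qed
  have pos: "hausdorff_measure s (?g ` I) \<noteq> 0" if "0 \<le> s" "s < 1" for s
  proof -
    have "ennreal ((b-a)/2) \<le> hausdorff_pre s 1 (?g ` I)"
      by (rule hp_lower) (use abI ab that in auto)
    also have "\<dots> \<le> hausdorff_measure s (?g ` I)" by (rule hm_ge) simp
    finally show ?thesis using ab by auto
  qed
  define T where "T = {s. s \<ge> 0 \<and> hausdorff_measure s (?g ` I) = 0}"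
  have T1: "s \<in> T" if "s > 1" for s using sf_zero[OF sf that] that unfolding T_def by auto
  have T2: "s \<ge> 1" if sT: "s \<in> T" for s
  proof (rule ccontr)
    assume "\<not> 1 \<le> s"
    moreover have "0 \<le> s" "hausdorff_measure s (?g ` I) = 0" using sT unfolding T_def by simp_all
    ultimately show False using pos[of s] by simp
  qed
  have ne: "T \<noteq> {}" using T1[of 2] by auto
  have bdd: "bdd_below T" unfolding T_def by (rule bdd_belowI[of _ 0]) auto
  have ge: "Inf T \<ge> 1" by (rule cInf_greatest[OF ne]) (rule T2)
  have le: "Inf T \<le> 1"
  proof (rule ccontr)
    assume "\<not> Inf T \<le> 1"
    then have "(1 + Inf T)/2 \<in> T" by (intro T1) simp
    then have "Inf T \<le> (1 + Inf T)/2" by (rule cInf_lower[OF _ bdd])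
    then show False using \<open>\<not> Inf T \<le> 1\<close> by simp
  qed
  have "hausdorff_dim (?g ` I) = 1" unfolding hausdorff_dim_def T_def[symmetric] using ge le by simp
  then show ?thesis using sf by simp
qed

end
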